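(* In the setting described in the context, choose an initial point $x_0$ and confidence $0<\rho<1$, and let the accuracy $\epsilon>0$ and iteration counter $k$ be chosen in one of the following two ways: (i) $\epsilon<F(x_0)-F^*$ and $$k\geq\frac{2n\max\{\mathcal{R}_L^2(x_0),F(x_0)-F^*\}}{\epsilon}\left(1+\log\frac1\rho\right)+2-\frac{2n\max\{\mathcal{R}_L^2(x_0),F(x_0)-F^*\}}{F(x_0)-F^*};$$ (ii) $\epsilon<\min\{\mathcal{R}_L^2(x_0),F(x_0)-F^*\}$ and $$k\geq\frac{2n\mathcal{R}_L^2(x_0)}{\epsilon}\log\frac{F(x_0)-F^*}{\epsilon\rho}.$$ If $x_k$ is the random point generated by UCDC$(x_0)$ applied to $F$, then $\mathbf{P}(F(x_k)-F^*\leq\epsilon)\geq1-\rho$.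
   Context: Let $U\in\mathbf{R}^{N\times N}$ be a column permutation of the $N\times N$ identity matrix, partitioned as $U=[U_1,\dots,U_n]$ with $U_i\in\mathbf{R}^{N\times N_i}$, $\sum_iN_i=N$. For $x\in\mathbf{R}^N$ write $x^{(i)}=U_i^Tx$. Each $\mathbf{R}^{N_i}$ carries the norm $\|t\|_{(i)}=\langle B_it,t\rangle^{1/2}$ and dual norm $\|t\|_{(i)}^*=\langle B_i^{-1}t,t\rangle^{1/2}$ with $B_i$ positive definite. Consider minimizing $F(x)=f(x)+\Psi(x)$ over $\mathbf{R}^N$, where $f$ is convex and differentiable with $\|\nabla_if(x+U_it)-\nabla_if(x)\|_{(i)}^*\leq L_i\|t\|_{(i)}$ for all $x\in\mathbf{R}^N,t\in\mathbf{R}^{N_i}$, $i$ (constants $L_i>0$, $\nabla_if(x)=U_i^T\nabla f(x)$), and $\Psi(x)=\sum_i\Psi_i(x^{(i)})$ with each $\Psi_i$ proper closed convex. The problem has a minimizer; $F^*$ is the optimal value and $X^*$ the set of minimizers. Let $\|x\|_L=(\sum_iL_i\|x^{(i)}\|_{(i)}^2)^{1/2}$ and $\mathcal{R}_L(x)=\max_y\max_{x^*\in X^*}\{\|y-x^*\|_L: F(y)\leq F(x)\}$; $\mathcal{R}_L^2(x)$ denotes its square. Algorithm UCDC$(x_0)$: for $k=0,1,2,\dots$, choose $i\in\{1,\dots,n\}$ uniformly at random (independently), compute $T^{(i)}(x_k)=\arg\min_{t\in\mathbf{R}^{N_i}}\{\langle\nabla_if(x_k),t\rangle+\frac{L_i}{2}\|t\|_{(i)}^2+\Psi_i(x_k^{(i)}+t)\}$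 and set $x_{k+1}=x_k+U_iT^{(i)}(x_k)$. *)

theory Defs
  imports "HOL-Analysis.Analysis" "HOL-Probability.Probability"
begin

text \<open>The block structure U = [U_1,...,U_n] (a column permutation of the identity) is
  encoded by a map blk assigning each coordinate its block; blocks are numbered
  0..n-1. A vector of R^{N_i} is identified with U_i t, i.e. a vector of R^N
  supported on block i.\<close>

definition blockspace :: "('N::finite \<Rightarrow> nat) \<Rightarrow> nat \<Rightarrow> (real^'N) set" where
  "blockspace blk i = {t. \<forall>j. blk j \<noteq> i \<longrightarrow> t $ j = 0}"

text \<open>bproj blk i x = U_i U_i^T x, i.e. x^(i) embedded back into R^N.\<close>
definition bproj :: "('N::finite \<Rightarrow> nat) \<Rightarrow> nat \<Rightarrow> real^'N \<Rightarrow> real^'N" where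
  "bproj blk i x = (\<chi> j. if blk j = i then x $ j else 0)"

text \<open>Block norm ||t||_(i) = <B_i t, t>^(1/2); B i is an N x N matrix of which only the
  block-i principal submatrix matters.\<close>
definition bnorm :: "('N::finite \<Rightarrow> nat) \<Rightarrow> (nat \<Rightarrow> real^'N^'N) \<Rightarrow> nat \<Rightarrow> real^'N \<Rightarrow> real" where
  "bnorm blk B i t = sqrt (bproj blk i t \<bullet> (B i *v bproj blk i t))"

text \<open>B_i^{-1} s, the unique block-i vector u with B_i u = s (on block i).\<close>
definition binv :: "('N::finite \<Rightarrow> nat) \<Rightarrow> (nat \<Rightarrow> real^'N^'N) \<Rightarrow> nat \<Rightarrow> real^'N \<Rightarrow> real^'N" where
  "binv blk B i s = (THE u. u \<in> blockspace blk i \<and> bproj blk i (B i *v u) = bproj blk i s)"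

definition bdual :: "('N::finite \<Rightarrow> nat) \<Rightarrow> (nat \<Rightarrow> real^'N^'N) \<Rightarrow> nat \<Rightarrow> real^'N \<Rightarrow> real" where
  "bdual blk B i s = sqrt (bproj blk i s \<bullet> binv blk B i s)"

definition normL :: "('N::finite \<Rightarrow> nat) \<Rightarrow> (nat \<Rightarrow> real^'N^'N) \<Rightarrow> (nat \<Rightarrow> real) \<Rightarrow> nat \<Rightarrow> real^'N \<Rightarrow> real" where
  "normL blk B L n x = sqrt (\<Sum>i<n. L i * (bnorm blk B i x)\<^sup>2)"

definition Psi_tot :: "('N::finite \<Rightarrow> nat) \<Rightarrow> (nat \<Rightarrow> real^'N \<Rightarrow> ereal) \<Rightarrow> nat \<Rightarrow> real^'N \<Rightarrow> ereal" where
  "Psi_tot blk Psi n x = (\<Sum>i<n. Psi i (bproj blk i x))"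

definition Fobj :: "(real^'N \<Rightarrow> real) \<Rightarrow> ('N::finite \<Rightarrow> nat) \<Rightarrow> (nat \<Rightarrow> real^'N \<Rightarrow> ereal) \<Rightarrow> nat \<Rightarrow> real^'N \<Rightarrow> ereal" where
  "Fobj f blk Psi n x = ereal (f x) + Psi_tot blk Psi n x"

text \<open>T^(i)(x) (embedded in R^N); g is the gradient of f.\<close>
definition Tstep :: "('N::finite \<Rightarrow> nat) \<Rightarrow> (nat \<Rightarrow> real^'N^'N) \<Rightarrow> (nat \<Rightarrow> real) \<Rightarrow> (real^'N \<Rightarrow> real^'N)
     \<Rightarrow> (nat \<Rightarrow> real^'N \<Rightarrow> ereal) \<Rightarrow> nat \<Rightarrow> real^'N \<Rightarrow> real^'N" where
  "Tstep blk B L g Psi i x =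
     (let obj = (\<lambda>t. ereal (bproj blk i (g x) \<bullet> t + L i / 2 * (bnorm blk B i t)\<^sup>2)
                      + Psi i (bproj blk i x + t))
      in SOME t. t \<in> blockspace blk i \<and> (\<forall>s \<in> blockspace blk i. obj t \<le> obj s))"

text \<open>Iterates of UCDC(x0) along a sequence of chosen block indices om 0, om 1, ...\<close>
primrec ucdc :: "('N::finite \<Rightarrow> nat) \<Rightarrow> (nat \<Rightarrow> real^'N^'N) \<Rightarrow> (nat \<Rightarrow> real) \<Rightarrow> (real^'N \<Rightarrow> real^'N)
     \<Rightarrow> (nat \<Rightarrow> real^'N \<Rightarrow> ereal) \<Rightarrow> real^'N \<Rightarrow> (nat \<Rightarrow> nat) \<Rightarrow> nat \<Rightarrow> real^'N" where
  "ucdc blk B L g Psi x0 om 0 = x0"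
| "ucdc blk B L g Psi x0 om (Suc k) =
     (let x = ucdc blk B L g Psi x0 om k in x + Tstep blk B L g Psi (om k) x)"

end

theory Submission
  imports Defs
begin

definition Om :: "nat \<Rightarrow> nat \<Rightarrow> (nat \<Rightarrow> nat) set" where
  "Om n k = PiE_dflt {..<k} 0 (\<lambda>_. {..<n})"

lemma finite_Om: "finite (Om n k)"
  unfolding Om_def by (rule finite_PiE_dflt) auto

lemma card_Om: "card (Om n k) = n ^ k"
  unfolding Om_def by (subst card_PiE_dflt) auto

lemma Om_lt: "om \<in> Om n k \<Longrightarrow> j < k \<Longrightarrow> om j < n"
  unfolding Om_def PiE_dflt_def by auto

lemma Om_Suc: "Om n (Suc k) = (\<lambda>(om,i). om(k:=i)) ` (Om n k \<times> {..<n})"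
proof (rule set_eqI, rule iffI)
  fix f assume f: "f \<in> Om n (Suc k)"
  have "f(k:=0) \<in> Om n k" using f unfolding Om_def PiE_dflt_def by auto
  moreover have "f k < n" using f unfolding Om_def PiE_dflt_def by auto
  moreover have "f = (\<lambda>(om,i). om(k:=i)) (f(k:=0), f k)" by auto
  ultimately show "f \<in> (\<lambda>(om,i). om(k:=i)) ` (Om n k \<times> {..<n})" by blast
next
  fix f assume "f \<in> (\<lambda>(om,i). om(k:=i)) ` (Om n k \<times> {..<n})"
  then obtain om i where "om \<in> Om n k" "i < n" "f = om(k:=i)" by auto
  then show "f \<in> Om n (Suc k)" unfolding Om_def PiE_dflt_def by auto
qed

lemma Om_inj: "inj_on (\<lambda>(om,i). om(k:=i)) (Om n k \<times> {..<n})"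
proof (rule inj_onI, clarify)
  fix om i om' i' assume a: "om \<in> Om n k" "om' \<in> Om n k" "om(k:=i) = om'(k:=i')"
  have "i = i'" using fun_cong[OF a(3), of k] by simp
  moreover have "om = om'"
  proof
    fix j show "om j = om' j"
    proof (cases "j = k")
      case True then show ?thesis using a(1,2) unfolding Om_def PiE_dflt_def by auto
    next
      case False then show ?thesis using fun_cong[OF a(3), of j] by simp
    qed
  qed
  ultimately show "om = om' \<and> i = i'" by simp
qed

primrec Xs :: "(nat \<Rightarrow> 'a \<Rightarrow> 'a) \<Rightarrow> 'a \<Rightarrow> (nat \<Rightarrow> nat) \<Rightarrow> nat \<Rightarrow> 'a" where
  "Xs st x0 om 0 = x0"
| "Xs st x0 om (Suc k) = st (om k) (Xs st x0 om k)"

lemma Xs_cong: "(\<forall>j<k. om j = om' j) \<Longrightarrow> Xs st x0 om k = Xs st x0 om' k"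
  by (induction k) auto

lemma Xs_upd0: "Xs st x0 (om(k:=i)) k = Xs st x0 om k"
  by (rule Xs_cong) auto

lemma Xs_upd: "Xs st x0 (om(k:=i)) (Suc k) = st i (Xs st x0 om k)"
  by (simp add: Xs_upd0)

lemma sum_Om_Suc:
  "(\<Sum>om\<in>Om n (Suc k). \<phi> (Xs st x0 om (Suc k))) =
   (\<Sum>om\<in>Om n k. \<Sum>i<n. \<phi> (st i (Xs st x0 om k)))"
proof -
  have "(\<Sum>om\<in>Om n (Suc k). \<phi> (Xs st x0 om (Suc k))) =
        (\<Sum>p\<in>Om n k \<times> {..<n}. \<phi> (Xs st x0 ((\<lambda>(om,i). om(k:=i)) p) (Suc k)))"
    unfolding Om_Suc by (subst sum.reindex[OF Om_inj]) (simp add: comp_def)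
  also have "\<dots> = (\<Sum>p\<in>Om n k \<times> {..<n}. \<phi> (st (snd p) (Xs st x0 (fst p) k)))"
    by (rule sum.cong) (auto simp: Xs_upd Xs_upd0)
  also have "\<dots> = (\<Sum>om\<in>Om n k. \<Sum>i<n. \<phi> (st i (Xs st x0 om k)))"
    by (simp add: sum.cartesian_product case_prod_beta)
  finally show ?thesis .
qed

lemma Xs_inv:
  assumes "P x0" "\<And>x i. P x \<Longrightarrow> i < n \<Longrightarrow> P (st i x)" "\<forall>j<k. om j < n"
  shows "P (Xs st x0 om k)"
  using assms(3) by (induction k) (auto intro: assms(1,2))

lemma prob_Om:
  assumes "n > 0"
  shows "measure_pmf.prob (Pi_pmf {..<k} (0::nat) (\<lambda>_. pmf_of_set {..<n})) X
         = card (X \<inter> Om n k) / real n ^ k"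
proof -
  let ?p = "Pi_pmf {..<k} (0::nat) (\<lambda>_. pmf_of_set {..<n})"
  have sp: "set_pmf ?p = Om n k"
  proof -
    have "set_pmf (pmf_of_set {..<n}) = {..<n}" using assms by (intro set_pmf_of_set) auto
    then show ?thesis unfolding Om_def by (subst set_Pi_pmf) (auto simp: comp_def)
  qed
  have "measure_pmf.prob ?p X = measure_pmf.prob ?p (X \<inter> set_pmf ?p)"
    by (simp add: measure_Int_set_pmf)
  also have "\<dots> = sum (pmf ?p) (X \<inter> Om n k)"
    using sp by (simp add: measure_measure_pmf_finite finite_Om)
  also have "\<dots> = sum (\<lambda>_. 1 / real n ^ k) (X \<inter> Om n k)"
  proof (rule sum.cong)
    fix om assume om: "om \<in> X \<inter> Om n k"
    have pj: "pmf (pmf_of_set {..<n}) j = 1 / real n" if "j < n" for j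
      using assms that by (subst pmf_of_set) (auto simp: indicator_def)
    have "pmf ?p om = (\<Prod>x\<in>{..<k}. pmf (pmf_of_set {..<n}) (om x))"
      using om by (intro pmf_Pi') (auto simp: Om_def PiE_dflt_def)
    also have "\<dots> = (\<Prod>x\<in>{..<k}. 1 / real n)"
      using om assms pj by (intro prod.cong) (auto simp: Om_def PiE_dflt_def indicator_def)
    finally show "pmf ?p om = 1 / real n ^ k" by (simp add: power_one_over)
  qed simp
  finally show ?thesis by simp
qed


lemma pow_exp_bound:
  fixes q :: real assumes "0 \<le> q" "q \<le> 1"
  shows "(1 - q) ^ j \<le> exp (- (q * real j))"
proof -
  have "(1 - q) ^ j \<le> exp (- q) ^ j"
    using assms exp_ge_add_one_self[of "-q"] by (intro power_mono) auto
  also have "\<dots> = exp (- (q * real j))" by (simp add: exp_of_nat_mult[symmetric] mult.commute)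
  finally show ?thesis .
qed

lemma recip_step:
  fixes s c :: real assumes "0 < s" "0 < c"
  shows "c / s - (c / s)^2 / c \<le> c / (s + 1)"
proof -
  have "c / s - (c / s)^2 / c = c * (s - 1) / s^2" using assms by (simp add: field_simps power2_eq_square)
  also have "\<dots> \<le> c / (s + 1)"
  proof -
    have "(s - 1) * (s + 1) \<le> s^2" by (simp add: algebra_simps power2_eq_square)
    then have "c * ((s - 1) * (s + 1)) \<le> c * s^2" using assms by (intro mult_left_mono) auto
    then show ?thesis using assms by (simp add: field_simps power2_eq_square)
  qed
  finally show ?thesis .
qed

lemma seq_i:
  fixes th :: "nat \<Rightarrow> real"
  assumes nn: "\<And>j. 0 \<le> th j" and t0: "th 0 = D" and D: "0 < D" and cD: "2 * D \<le> c"
    and s1: "\<And>j. th (Suc j) \<le> th j - (th j)^2 / c"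
    and s2: "\<And>j. th (Suc j) \<le> th j * (1 - eps / c)"
    and eps: "0 < eps" "eps < D" and rho: "0 < rho" "rho < 1"
    and k: "real k \<ge> c / eps * (1 + ln (1 / rho)) + 2 - c / D"
  shows "th k \<le> eps * rho"
proof -
  have c: "0 < c" using D cD by linarith
  have A: "th j \<le> c / (real j + c / D)" for j
  proof (induction j)
    case 0 then show ?case using t0 D c by simp
  next
    case (Suc j)
    define s where "s = real j + c / D"
    have s: "0 < s" using c D unfolding s_def by (intro add_nonneg_pos) auto
    define b where "b = c / s"
    have bD: "b \<le> D"
    proof -
      have "c / D \<le> s" by (simp add: s_def)
      then have "c / s \<le> c / (c / D)" using c D s by (intro divide_left_mono) auto
      then show ?thesis using c D by (simp add: b_def)
    qed
    have a: "th j \<le> b" using Suc by (simp add: b_def s_def)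
    have "th (Suc j) \<le> th j - (th j)^2 / c" by (rule s1)
    also have "\<dots> \<le> b - b^2 / c"
    proof -
      have "b - b^2 / c - (th j - (th j)^2 / c) = (b - th j) * (1 - (b + th j) / c)"
        using c by (simp add: field_simps power2_eq_square)
      also have "\<dots> \<ge> 0"
      proof -
        have "b + th j \<le> c" using a bD cD by linarith
        then have "(b + th j) / c \<le> 1" using c by simp
        then show ?thesis using a by (intro mult_nonneg_nonneg) auto
      qed
      finally show ?thesis by linarith
    qed
    also have "\<dots> \<le> c / (s + 1)" unfolding b_def by (rule recip_step[OF s c])
    also have "s + 1 = real (Suc j) + c / D" by (simp add: s_def)
    finally show ?case .
  qed
  have B: "th (m + j) \<le> th m * (1 - eps / c) ^ j" for m j
  proof (induction j)
    case 0 then show ?case by simp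
  next
    case (Suc j)
    have q: "0 \<le> 1 - eps / c" using eps cD c by (simp add: field_simps)
    have "th (m + Suc j) \<le> th (m + j) * (1 - eps / c)" using s2[of "m + j"] by simp
    also have "\<dots> \<le> th m * (1 - eps / c) ^ j * (1 - eps / c)"
      using Suc q by (intro mult_right_mono) auto
    finally show ?case by (simp add: ac_simps)
  qed
  have lnr: "0 \<le> ln (1 / rho)" using rho by simp
  have ce: "c / D < c / eps" using eps c by (intro divide_strict_left_mono) auto
  define k1 where "k1 = nat \<lceil>c / eps - c / D\<rceil>"
  have k1a: "c / eps - c / D \<le> real k1" unfolding k1_def by linarith
  have k1b: "real k1 \<le> c / eps - c / D + 1" unfolding k1_def using ce by linarith
  have th1: "th k1 \<le> eps"
  proof -
    have "th k1 \<le> c / (real k1 + c / D)" by (rule A)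
    also have "\<dots> \<le> c / (c / eps)"
    proof -
      have "0 < c / eps" using c eps by simp
      moreover have "c / eps \<le> real k1 + c / D" using k1a by linarith
      ultimately show ?thesis using c by (intro divide_left_mono mult_pos_pos) auto
    qed
    also have "\<dots> = eps" using c by simp
    finally show ?thesis .
  qed
  have "c / eps * (1 + ln (1 / rho)) \<ge> c / eps" using lnr c eps by (simp add: field_simps)
  then have kk: "real k1 \<le> real k" using k k1b by linarith
  define j where "j = k - k1"
  have kj: "k = k1 + j" using kk unfolding j_def by linarith
  have "c / eps * (1 + ln (1 / rho)) = c / eps + c / eps * ln (1 / rho)" by (simp add: algebra_simps)
  then have rj: "real j \<ge> c / eps * ln (1 / rho)" using k k1b kj by simp
  define q where "q = eps / c"
  have q: "0 \<le> q" "q \<le> 1" using eps c cD by (auto simp: q_def field_simps)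
  have "th k \<le> th k1 * (1 - q) ^ j" unfolding kj q_def by (rule B)
  also have "\<dots> \<le> eps * (1 - q) ^ j" using th1 q by (intro mult_right_mono) auto
  also have "\<dots> \<le> eps * exp (- (q * real j))" using eps by (intro mult_left_mono pow_exp_bound q) auto
  also have "\<dots> \<le> eps * rho"
  proof -
    have "q * real j \<ge> q * (c / eps * ln (1 / rho))" using rj q by (intro mult_left_mono) auto
    also have "q * (c / eps * ln (1 / rho)) = ln (1 / rho)" using c eps by (simp add: q_def)
    finally have "exp (- (q * real j)) \<le> exp (- ln (1 / rho))" by simp
    also have "\<dots> = rho" using rho by (simp add: ln_div)
    finally show ?thesis using eps by simp
  qed
  finally show ?thesis .
qed

lemma seq_ii:
  fixes th :: "nat \<Rightarrow> real"
  assumes t0: "th 0 = D" and c: "0 < c"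
    and s2: "\<And>j. th (Suc j) \<le> th j * (1 - eps / c)"
    and eps: "0 < eps" "eps < D" "eps \<le> c" and rho: "0 < rho" "rho < 1"
    and k: "real k \<ge> c / eps * ln (D / (eps * rho))"
  shows "th k \<le> eps * rho"
proof -
  define q where "q = eps / c"
  have q: "0 \<le> q" "q \<le> 1" using eps c by (auto simp: q_def field_simps)
  have B: "th j \<le> D * (1 - q) ^ j" for j
  proof (induction j)
    case 0 then show ?case using t0 by simp
  next
    case (Suc j)
    have "th (Suc j) \<le> th j * (1 - q)" using s2 by (simp add: q_def)
    also have "\<dots> \<le> D * (1 - q) ^ j * (1 - q)" using Suc q by (intro mult_right_mono) auto
    finally show ?case by (simp add: ac_simps)
  qed
  have D: "0 < D" using eps by linarith
  have "th k \<le> D * (1 - q) ^ k" by (rule B)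
  also have "\<dots> \<le> D * exp (- (q * real k))" using D by (intro mult_left_mono pow_exp_bound q) auto
  also have "\<dots> \<le> eps * rho"
  proof -
    have "q * real k \<ge> q * (c / eps * ln (D / (eps * rho)))" using k q by (intro mult_left_mono) auto
    also have "q * (c / eps * ln (D / (eps * rho))) = ln (D / (eps * rho))" using c eps by (simp add: q_def)
    finally have "exp (- (q * real k)) \<le> exp (- ln (D / (eps * rho)))" by simp
    also have "\<dots> = eps * rho / D" using rho eps D by (simp add: ln_div exp_diff exp_minus)
    finally show ?thesis using D by (simp add: field_simps)
  qed
  finally show ?thesis .
qed


lemma sum_sq_ge:
  fixes z :: "'b \<Rightarrow> real" assumes "finite S" "card S > 0"
  shows "(\<Sum>x\<in>S. z x)^2 / real (card S) \<le> (\<Sum>x\<in>S. (z x)^2)"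
proof -
  define N where "N = real (card S)"
  have N: "0 < N" using assms by (simp add: N_def)
  define t where "t = (\<Sum>x\<in>S. z x) / N"
  have "0 \<le> (\<Sum>x\<in>S. (z x - t)^2)" by (intro sum_nonneg) auto
  also have "\<dots> = (\<Sum>x\<in>S. (z x)^2 - 2 * t * z x + t^2)"
    by (intro sum.cong) (auto simp: power2_diff algebra_simps)
  also have "\<dots> = (\<Sum>x\<in>S. (z x)^2) - 2 * t * (\<Sum>x\<in>S. z x) + N * t^2"
    by (simp add: sum.distrib sum_subtractf sum_distrib_left N_def)
  also have "2 * t * (\<Sum>x\<in>S. z x) = 2 * N * t^2" using N by (simp add: t_def power2_eq_square)
  finally have "N * t^2 \<le> (\<Sum>x\<in>S. (z x)^2)" by simp
  moreover have "N * t^2 = (\<Sum>x\<in>S. z x)^2 / N" using N by (simp add: t_def power2_eq_square)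
  ultimately show ?thesis by (simp add: N_def)
qed

lemma abstract_main:
  fixes st :: "nat \<Rightarrow> 'a \<Rightarrow> 'a" and xi :: "'a \<Rightarrow> real"
  assumes n: "n > 0"
    and P0: "P x0" and Pst: "\<And>x i. P x \<Longrightarrow> i < n \<Longrightarrow> P (st i x)"
    and nonneg: "\<And>x. P x \<Longrightarrow> 0 \<le> xi x"
    and mono: "\<And>x i. P x \<Longrightarrow> i < n \<Longrightarrow> xi (st i x) \<le> xi x"
    and avg: "\<And>x a. P x \<Longrightarrow> 0 \<le> a \<Longrightarrow> a \<le> 1 \<Longrightarrow>
               (\<Sum>i<n. xi (st i x)) \<le> real n * xi x - a * xi x + a^2 * Rsq / 2"
    and Rsq: "0 \<le> Rsq" and D: "xi x0 = D"
    and rho: "0 < rho" "rho < 1" and eps: "0 < eps"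
    and choice: "(eps < D \<and> real k \<ge> 2 * real n * max Rsq D / eps * (1 + ln (1 / rho)) + 2
                    - 2 * real n * max Rsq D / D)
               \<or> (eps < min Rsq D \<and> real k \<ge> 2 * real n * Rsq / eps * ln (D / (eps * rho)))"
  shows "real (card {om \<in> Om n k. xi (Xs st x0 om k) \<le> eps}) / real n ^ k \<ge> 1 - rho"
proof -
  define Q where "Q x = (P x \<and> xi x \<le> D)" for x
  have Q0: "Q x0" using P0 D by (simp add: Q_def)
  have Qst: "Q (st i x)" if "Q x" "i < n" for x i
    using that Pst mono by (force simp: Q_def)
  have QX: "Q (Xs st x0 om j)" if "om \<in> Om n j" for om j
    by (rule Xs_inv[where P=Q and n=n]) (use Q0 Qst Om_lt[OF that] in auto)
  define z where "z x = (if eps \<le> xi x then xi x else 0)" for x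
  have z_nn: "0 \<le> z x" if "P x" for x using nonneg[OF that] by (simp add: z_def)
  have z_le: "z x \<le> xi x" if "P x" for x using nonneg[OF that] by (simp add: z_def)
  have z_sq: "eps * z x \<le> (z x)^2" for x
    using eps by (auto simp: z_def power2_eq_square intro: mult_right_mono)
  define th where "th j = (\<Sum>om\<in>Om n j. z (Xs st x0 om j)) / real n ^ j" for j
  have npos: "0 < real n ^ j" for j using n by simp
  have th_nn: "0 \<le> th j" for j
    unfolding th_def using QX z_nn by (intro divide_nonneg_pos sum_nonneg npos) (auto simp: Q_def)
  have th_step: "th (Suc j) \<le> (\<Sum>om\<in>Om n j. G (z (Xs st x0 om j))) / real n ^ j"
    if G: "\<And>x. Q x \<Longrightarrow> (\<Sum>i<n. z (st i x)) \<le> real n * G (z x)" for G j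
  proof -
    have "th (Suc j) = (\<Sum>om\<in>Om n j. \<Sum>i<n. z (st i (Xs st x0 om j))) / real n ^ Suc j"
      unfolding th_def by (subst sum_Om_Suc) simp
    also have "\<dots> \<le> (\<Sum>om\<in>Om n j. real n * G (z (Xs st x0 om j))) / real n ^ Suc j"
      using npos[of "Suc j"] by (intro divide_right_mono sum_mono G QX) auto
    also have "\<dots> = (\<Sum>om\<in>Om n j. G (z (Xs st x0 om j))) / real n ^ j"
      using n by (simp add: sum_distrib_left[symmetric])
    finally show ?thesis .
  qed
  have zst0: "z (st i x) = 0" if "Q x" "xi x < eps" "i < n" for x i
    using mono[of x i] that by (auto simp: z_def Q_def)
  have th0: "th 0 = z x0"
  proof -
    have "Om n 0 = {\<lambda>_. 0}" unfolding Om_def PiE_dflt_def by auto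
    then show ?thesis by (simp add: th_def)
  qed
  \<comment> \<open>Markov\<close>
  have markov: "real (card {om \<in> Om n k. xi (Xs st x0 om k) \<le> eps}) / real n ^ k \<ge> 1 - th k / eps"
  proof -
    define A where "A = {om \<in> Om n k. eps \<le> xi (Xs st x0 om k)}"
    have fA: "finite A" unfolding A_def using finite_Om by simp
    have "eps * real (card A) = (\<Sum>om\<in>A. eps)" by simp
    also have "\<dots> \<le> (\<Sum>om\<in>A. z (Xs st x0 om k))" by (intro sum_mono) (auto simp: A_def z_def)
    also have "\<dots> \<le> (\<Sum>om\<in>Om n k. z (Xs st x0 om k))"
      using QX z_nn by (intro sum_mono2 finite_Om) (auto simp: A_def Q_def)
    also have "\<dots> = real n ^ k * th k" using npos[of k] by (simp add: th_def)
    finally have cA: "eps * real (card A) \<le> real n ^ k * th k" .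
    have "Om n k - A \<subseteq> {om \<in> Om n k. xi (Xs st x0 om k) \<le> eps}" by (auto simp: A_def)
    then have "card (Om n k - A) \<le> card {om \<in> Om n k. xi (Xs st x0 om k) \<le> eps}"
      by (intro card_mono) (auto simp: finite_Om)
    moreover have "card (Om n k - A) = n ^ k - card A"
      using fA by (subst card_Diff_subset) (auto simp: A_def card_Om)
    moreover have "card A \<le> n ^ k" using card_mono[OF finite_Om, of A] by (auto simp: A_def card_Om)
    ultimately have "real (n ^ k) - real (card A) \<le> real (card {om \<in> Om n k. xi (Xs st x0 om k) \<le> eps})"
      by linarith
    moreover have "real (card A) \<le> real n ^ k * th k / eps" using cA eps by (simp add: field_simps)
    ultimately have "real n ^ k * (1 - th k / eps) \<le> real (card {om \<in> Om n k. xi (Xs st x0 om k) \<le> eps})"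
      by (simp add: algebra_simps)
    then show ?thesis using npos[of k] by (simp add: field_simps)
  qed
  have "th k \<le> eps * rho"
    using choice
  proof
    assume ch: "eps < D \<and> real k \<ge> 2 * real n * max Rsq D / eps * (1 + ln (1 / rho)) + 2
                    - 2 * real n * max Rsq D / D"
    define M where "M = max Rsq D"
    define c where "c = 2 * real n * M"
    have Dp: "0 < D" using ch eps by linarith
    have M: "0 < M" "Rsq \<le> M" "D \<le> M" using Dp by (auto simp: M_def)
    have c: "0 < c" using M n by (simp add: c_def)
    have cD: "2 * D \<le> c"
    proof -
      have "1 \<le> real n" using n by simp
      then have "2 * D \<le> 2 * real n * D" using Dp by simp
      also have "\<dots> \<le> 2 * real n * M" using M by (intro mult_left_mono) auto
      finally show ?thesis by (simp add: c_def)
    qed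
    have perstate: "(\<Sum>i<n. z (st i x)) \<le> real n * (z x - (z x)^2 / c)" if "Q x" for x
    proof (cases "eps \<le> xi x")
      case False
      then show ?thesis using zst0[OF that] by (simp add: z_def)
    next
      case True
      define s where "s = xi x"
      have zx: "z x = s" using True by (simp add: z_def s_def)
      have s: "0 \<le> s" "s \<le> D" using that nonneg by (auto simp: Q_def s_def)
      have "(\<Sum>i<n. z (st i x)) \<le> (\<Sum>i<n. xi (st i x))"
        using that by (intro sum_mono z_le) (auto simp: Q_def intro: Pst)
      also have "\<dots> \<le> real n * s - (s / M) * s + (s / M)^2 * Rsq / 2"
        unfolding s_def using that M s by (intro avg) (auto simp: Q_def s_def)
      also have "\<dots> \<le> real n * s - s^2 / (2 * M)"
      proof -
        have "(s / M)^2 * Rsq \<le> (s / M)^2 * M" using M by (intro mult_left_mono) auto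
        also have "\<dots> = s^2 / M" using M by (simp add: power2_eq_square)
        finally have "(s / M)^2 * Rsq / 2 \<le> s^2 / M / 2" by simp
        then have "real n * s - (s / M) * s + (s / M)^2 * Rsq / 2 \<le> real n * s - (s / M) * s + s^2 / M / 2"
          by (rule add_left_mono)
        also have "\<dots> = real n * s - s^2 / (2 * M)" using M by (simp add: field_simps power2_eq_square)
        finally show ?thesis .
      qed
      also have "\<dots> = real n * (z x - (z x)^2 / c)" using n M by (simp add: zx c_def field_simps)
      finally show ?thesis .
    qed
    have perstate2: "(\<Sum>i<n. z (st i x)) \<le> real n * (z x * (1 - eps / c))" if "Q x" for x
    proof -
      have "z x - (z x)^2 / c \<le> z x * (1 - eps / c)"
        using z_sq[of x] c by (simp add: field_simps)
      then show ?thesis using perstate[OF that] n by (smt (verit) mult_left_mono of_nat_0_le_iff)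
    qed
    show ?thesis
    proof (rule seq_i[where D=D and c=c])
      show "0 \<le> th j" for j by (rule th_nn)
      show "th 0 = D" using th0 ch D by (simp add: z_def)
      show "0 < D" by (rule Dp)
      show "2 * D \<le> c" by (rule cD)
      show "th (Suc j) \<le> th j - (th j)^2 / c" for j
      proof -
        define N where "N = real n ^ j"
        have N: "0 < N" using npos by (simp add: N_def)
        have "th (Suc j) \<le> (\<Sum>om\<in>Om n j. z (Xs st x0 om j) - (z (Xs st x0 om j))^2 / c) / N"
          unfolding N_def by (rule th_step) (rule perstate)
        also have "\<dots> = th j - (\<Sum>om\<in>Om n j. (z (Xs st x0 om j))^2) / (c * N)"
          using N c by (simp add: th_def N_def sum_subtractf sum_divide_distrib[symmetric] field_simps sum_distrib_left)
        also have "\<dots> \<le> th j - (th j)^2 / c"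
        proof -
          have "(\<Sum>om\<in>Om n j. z (Xs st x0 om j))^2 / real (card (Om n j))
                \<le> (\<Sum>om\<in>Om n j. (z (Xs st x0 om j))^2)"
            using n by (intro sum_sq_ge finite_Om) (simp add: card_Om)
          moreover have "(\<Sum>om\<in>Om n j. z (Xs st x0 om j))^2 / real (card (Om n j)) = N * (th j)^2"
            using N by (simp add: card_Om th_def N_def power2_eq_square)
          ultimately have "N * (th j)^2 \<le> (\<Sum>om\<in>Om n j. (z (Xs st x0 om j))^2)" by simp
          then have "(th j)^2 / c \<le> (\<Sum>om\<in>Om n j. (z (Xs st x0 om j))^2) / (c * N)"
            using N c by (simp add: field_simps)
          then show ?thesis by linarith
        qed
        finally show ?thesis .
      qed
      show "th (Suc j) \<le> th j * (1 - eps / c)" for j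
      proof -
        have "th (Suc j) \<le> (\<Sum>om\<in>Om n j. z (Xs st x0 om j) * (1 - eps / c)) / real n ^ j"
          by (rule th_step) (rule perstate2)
        also have "\<dots> = th j * (1 - eps / c)"
          by (simp add: th_def sum_distrib_right[symmetric])
        finally show ?thesis .
      qed
      show "0 < eps" "eps < D" "0 < rho" "rho < 1" using eps ch rho by auto
      show "c / eps * (1 + ln (1 / rho)) + 2 - c / D \<le> real k" using ch by (simp add: c_def M_def)
    qed
  next
    assume ch: "eps < min Rsq D \<and> real k \<ge> 2 * real n * Rsq / eps * ln (D / (eps * rho))"
    define c where "c = 2 * real n * Rsq"
    have R2p: "0 < Rsq" using ch eps by linarith
    have c: "0 < c" using R2p n by (simp add: c_def)
    have ec: "eps \<le> c"
    proof -
      have "1 \<le> real n" using n by simp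
      then have "Rsq \<le> real n * Rsq" using R2p by simp
      then show ?thesis using ch R2p unfolding c_def by linarith
    qed
    have perstate: "(\<Sum>i<n. z (st i x)) \<le> real n * (z x * (1 - eps / c))" if "Q x" for x
    proof (cases "eps \<le> xi x")
      case False
      then show ?thesis using zst0[OF that] by (simp add: z_def)
    next
      case True
      define s where "s = xi x"
      have zx: "z x = s" using True by (simp add: z_def s_def)
      have s: "eps \<le> s" using True by (simp add: s_def)
      have a1: "eps / Rsq \<le> 1" using ch R2p by simp
      have "(\<Sum>i<n. z (st i x)) \<le> (\<Sum>i<n. xi (st i x))"
        using that by (intro sum_mono z_le) (auto simp: Q_def intro: Pst)
      also have "\<dots> \<le> real n * s - (eps / Rsq) * s + (eps / Rsq)^2 * Rsq / 2"
        unfolding s_def using that a1 eps R2p by (intro avg) (auto simp: Q_def)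
      also have "\<dots> \<le> real n * s - eps * s / (2 * Rsq)"
      proof -
        have "(eps / Rsq)^2 * Rsq / 2 = eps * eps / (2 * Rsq)" using R2p by (simp add: power2_eq_square)
        also have "\<dots> \<le> eps * s / (2 * Rsq)" using R2p eps s by (intro divide_right_mono mult_left_mono) auto
        finally have "(eps / Rsq)^2 * Rsq / 2 \<le> eps * s / (2 * Rsq)" .
        moreover have "(eps / Rsq) * s = 2 * (eps * s / (2 * Rsq))" using R2p by simp
        ultimately show ?thesis by linarith
      qed
      also have "\<dots> = real n * (z x * (1 - eps / c))" using n R2p by (simp add: zx c_def field_simps)
      finally show ?thesis .
    qed
    show ?thesis
    proof (rule seq_ii[where D=D and c=c])
      show "th 0 = D" using th0 ch D by (simp add: z_def)
      show "0 < c" by (rule c)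
      show "th (Suc j) \<le> th j * (1 - eps / c)" for j
      proof -
        have "th (Suc j) \<le> (\<Sum>om\<in>Om n j. z (Xs st x0 om j) * (1 - eps / c)) / real n ^ j"
          by (rule th_step) (rule perstate)
        also have "\<dots> = th j * (1 - eps / c)"
          by (simp add: th_def sum_distrib_right[symmetric])
        finally show ?thesis .
      qed
      show "0 < eps" "eps < D" "eps \<le> c" "0 < rho" "rho < 1" using eps ch rho ec by auto
      show "c / eps * ln (D / (eps * rho)) \<le> real k" using ch by (simp add: c_def)
    qed
  qed
  then have "1 - rho \<le> 1 - th k / eps" using eps by (simp add: field_simps)
  then show ?thesis using markov by linarith
qed


lemma bproj_nth: "bproj blk i x $ j = (if blk j = i then x $ j else 0)"
  by (simp add: bproj_def)

lemma bproj_add: "bproj blk i (x + y) = bproj blk i x + bproj blk i y"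
  by (simp add: vec_eq_iff bproj_nth)
lemma bproj_diff: "bproj blk i (x - y) = bproj blk i x - bproj blk i y"
  by (simp add: vec_eq_iff bproj_nth)
lemma bproj_scaleR: "bproj blk i (r *\<^sub>R x) = r *\<^sub>R bproj blk i x"
  by (simp add: vec_eq_iff bproj_nth)
lemma bproj_minus: "bproj blk i (- x) = - bproj blk i x"
  by (simp add: vec_eq_iff bproj_nth)
lemma bproj_zero[simp]: "bproj blk i 0 = 0"
  by (simp add: vec_eq_iff bproj_nth)
lemma bproj_in: "bproj blk i x \<in> blockspace blk i"
  by (simp add: blockspace_def bproj_nth)
lemma bproj_id: "t \<in> blockspace blk i \<Longrightarrow> bproj blk i t = t"
  by (auto simp: vec_eq_iff bproj_nth blockspace_def)
lemma bproj_bproj[simp]: "bproj blk i (bproj blk i x) = bproj blk i x"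
  by (rule bproj_id[OF bproj_in])
lemma bproj_other: "i \<noteq> j \<Longrightarrow> t \<in> blockspace blk j \<Longrightarrow> bproj blk i t = 0"
  by (auto simp: vec_eq_iff bproj_nth blockspace_def)
lemma linear_bproj: "linear (bproj blk i)"
  by (rule linearI) (simp_all add: bproj_add bproj_scaleR)

lemma inner_bproj: "t \<in> blockspace blk i \<Longrightarrow> s \<bullet> t = bproj blk i s \<bullet> t"
  unfolding inner_vec_def by (intro sum.cong) (auto simp: bproj_nth blockspace_def)

lemma sum_bproj: "\<forall>j. blk j < n \<Longrightarrow> (\<Sum>i<n. bproj blk i x) = x"
proof -
  assume b: "\<forall>j. blk j < n"
  show ?thesis
  proof (subst vec_eq_iff, intro allI)
    fix j
    have "(\<Sum>i<n. bproj blk i x) $ j = (\<Sum>i<n. bproj blk i x $ j)" by (simp add: sum_component)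
    also have "\<dots> = (\<Sum>i<n. if blk j = i then x $ j else 0)" by (simp add: bproj_nth)
    also have "\<dots> = x $ j" using b by (simp add: sum.delta[of "{..<n}" "blk j" "\<lambda>_. x $ j", simplified] eq_commute)
    finally show "(\<Sum>i<n. bproj blk i x) $ j = x $ j" .
  qed
qed

lemma blockspace_add: "s \<in> blockspace blk i \<Longrightarrow> t \<in> blockspace blk i \<Longrightarrow> s + t \<in> blockspace blk i"
  by (simp add: blockspace_def)
lemma blockspace_diff: "s \<in> blockspace blk i \<Longrightarrow> t \<in> blockspace blk i \<Longrightarrow> s - t \<in> blockspace blk i"
  by (simp add: blockspace_def)
lemma blockspace_scaleR: "t \<in> blockspace blk i \<Longrightarrow> r *\<^sub>R t \<in> blockspace blk i"
  by (simp add: blockspace_def)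
lemma blockspace_zero[simp]: "0 \<in> blockspace blk i"
  by (simp add: blockspace_def)

lemma subspace_blockspace: "subspace (blockspace blk i)"
  unfolding subspace_def by (simp add: blockspace_add blockspace_scaleR)

lemma blockspace_eq: "blockspace blk i = bproj blk i ` UNIV"
  using bproj_id bproj_in by (metis image_eqI subsetI subset_antisym image_subset_iff UNIV_I)

lemma closed_blockspace: "closed (blockspace blk i)"
  by (rule closed_subspace[OF subspace_blockspace])

definition qf :: "('N::finite \<Rightarrow> nat) \<Rightarrow> (nat \<Rightarrow> real^'N^'N) \<Rightarrow> nat \<Rightarrow> real^'N \<Rightarrow> real" where
  "qf blk B i t = bproj blk i t \<bullet> (B i *v bproj blk i t)"

lemma qf_scaleR: "qf blk B i (r *\<^sub>R t) = r^2 * qf blk B i t"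
  by (simp add: qf_def bproj_scaleR matrix_vector_mult_scaleR power2_eq_square)

lemma qf_minus: "qf blk B i (- t) = qf blk B i t"
  using qf_scaleR[of blk B i "-1" t] by simp

lemma bnorm_qf: "bnorm blk B i t = sqrt (qf blk B i t)"
  by (simp add: bnorm_def qf_def)

lemma continuous_qf: "continuous_on UNIV (qf blk B i)"
proof -
  have c: "continuous_on UNIV (bproj blk i)"
    by (rule linear_continuous_on) (simp add: linear_conv_bounded_linear[symmetric] linear_bproj)
  have l2: "linear (\<lambda>t. B i *v bproj blk i t)"
    using linear_compose[OF linear_bproj matrix_vector_mul_linear] by (simp add: o_def)
  have c2: "continuous_on UNIV (\<lambda>t. B i *v bproj blk i t)"
    by (rule linear_continuous_on) (simp add: linear_conv_bounded_linear[symmetric] l2)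
  show ?thesis unfolding qf_def by (intro continuous_on_inner c c2)
qed


locale blk_setup =
  fixes blk :: "'N::finite \<Rightarrow> nat" and n :: nat and B :: "nat \<Rightarrow> real^'N^'N"
  assumes B_sym: "\<forall>i<n. \<forall>j l. blk j = i \<and> blk l = i \<longrightarrow> B i $ j $ l = B i $ l $ j"
    and B_pd: "\<forall>i<n. \<forall>t \<in> blockspace blk i. t \<noteq> 0 \<longrightarrow> t \<bullet> (B i *v t) > 0"
begin

abbreviation V where "V i \<equiv> blockspace blk i"

lemma bil_sym:
  assumes i: "i < n" and u: "u \<in> V i" and v: "v \<in> V i"
  shows "u \<bullet> (B i *v v) = v \<bullet> (B i *v u)"
proof -
  have "u \<bullet> (B i *v v) = (\<Sum>j\<in>UNIV. \<Sum>l\<in>UNIV. u$j * B i$j$l * v$l)"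
    by (simp add: inner_vec_def matrix_vector_mult_def sum_distrib_left mult.assoc)
  also have "\<dots> = (\<Sum>j\<in>UNIV. \<Sum>l\<in>UNIV. v$l * B i$l$j * u$j)"
  proof (intro sum.cong refl)
    fix j l
    show "u$j * B i$j$l * v$l = v$l * B i$l$j * u$j"
    proof (cases "u$j = 0 \<or> v$l = 0")
      case True then show ?thesis by auto
    next
      case False
      then have "blk j = i" "blk l = i" using u v by (auto simp: blockspace_def)
      then have "B i$j$l = B i$l$j" using B_sym i by auto
      then show ?thesis by simp
    qed
  qed
  also have "\<dots> = (\<Sum>l\<in>UNIV. \<Sum>j\<in>UNIV. v$l * B i$l$j * u$j)" by (rule sum.swap)
  also have "\<dots> = v \<bullet> (B i *v u)"
    by (simp add: inner_vec_def matrix_vector_mult_def sum_distrib_left mult.assoc)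
  finally show ?thesis .
qed

lemma bil_nonneg: "i < n \<Longrightarrow> t \<in> V i \<Longrightarrow> 0 \<le> t \<bullet> (B i *v t)"
  using B_pd by (cases "t = 0") (auto simp: less_imp_le)

lemma qf_nonneg: "i < n \<Longrightarrow> 0 \<le> qf blk B i t"
  unfolding qf_def by (rule bil_nonneg) (auto simp: bproj_in)

lemma qf_V: "t \<in> V i \<Longrightarrow> qf blk B i t = t \<bullet> (B i *v t)"
  by (simp add: qf_def bproj_id)

lemma bnorm_sq: "i < n \<Longrightarrow> (bnorm blk B i t)^2 = qf blk B i t"
  by (simp add: bnorm_qf qf_nonneg)

lemma bil_CS:
  assumes i: "i < n" and u: "u \<in> V i" and v: "v \<in> V i"
  shows "(u \<bullet> (B i *v v))^2 \<le> (u \<bullet> (B i *v u)) * (v \<bullet> (B i *v v))"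
proof -
  define a where "a = u \<bullet> (B i *v u)"
  define b where "b = u \<bullet> (B i *v v)"
  define c where "c = v \<bullet> (B i *v v)"
  have expand: "0 \<le> a - 2 * r * b + r^2 * c" for r
  proof -
    have w: "u - r *\<^sub>R v \<in> V i" using u v by (intro blockspace_diff blockspace_scaleR)
    have "0 \<le> (u - r *\<^sub>R v) \<bullet> (B i *v (u - r *\<^sub>R v))" by (rule bil_nonneg[OF i w])
    also have "\<dots> = a - r * b - r * (v \<bullet> (B i *v u)) + r^2 * c"
      by (simp add: a_def b_def c_def matrix_vector_mult_diff_distrib matrix_vector_mult_scaleR
          inner_diff_left inner_diff_right power2_eq_square algebra_simps)
    also have "v \<bullet> (B i *v u) = b" using bil_sym[OF i u v] by (simp add: b_def)
    finally show ?thesis by (simp add: ac_simps)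
  qed
  show ?thesis
  proof (cases "v = 0")
    case True then show ?thesis by simp
  next
    case False
    then have c: "0 < c" using B_pd i v by (auto simp: c_def)
    have "0 \<le> a - 2 * (b / c) * b + (b / c)^2 * c" by (rule expand)
    also have "\<dots> = a - b^2 / c" using c by (simp add: power2_eq_square field_simps)
    finally have "b^2 \<le> a * c" using c by (simp add: field_simps)
    then show ?thesis by (simp add: a_def b_def c_def)
  qed
qed

definition Mop where "Mop i u = bproj blk i (B i *v u)"

lemma linear_Mop: "linear (Mop i)"
  unfolding Mop_def using linear_compose[OF matrix_vector_mul_linear linear_bproj] by (simp add: o_def)

lemma binv_ex:
  assumes i: "i < n"
  shows "binv blk B i s \<in> V i \<and> bproj blk i (B i *v binv blk B i s) = bproj blk i s"
proof -
  have inj: "inj_on (Mop i) (V i)"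
  proof (rule inj_onI)
    fix u w assume u: "u \<in> V i" and w: "w \<in> V i" and e: "Mop i u = Mop i w"
    have d: "u - w \<in> V i" using u w by (rule blockspace_diff)
    have "Mop i (u - w) = 0" using e linear_diff[OF linear_Mop] by simp
    then have "(u - w) \<bullet> (B i *v (u - w)) = 0"
      using inner_bproj[OF d, of "B i *v (u - w)"] by (simp add: Mop_def inner_commute)
    then have "u - w = 0" using B_pd i d by force
    then show "u = w" by simp
  qed
  have sub: "Mop i ` V i \<subseteq> V i" by (auto simp: Mop_def bproj_in)
  have "dim (Mop i ` V i) = dim (V i)"
    using inj by (intro dim_image_eq linear_Mop) (simp add: span_eq_iff[THEN iffD2, OF subspace_blockspace])
  moreover have "subspace (Mop i ` V i)"
    by (rule linear_subspace_image[OF linear_Mop subspace_blockspace])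
  ultimately have eq: "Mop i ` V i = V i"
    using subspace_dim_equal[OF _ subspace_blockspace sub] by simp
  have "bproj blk i s \<in> Mop i ` V i" using eq bproj_in by simp
  then obtain u where u: "u \<in> V i" "Mop i u = bproj blk i s" by (auto simp del: blockspace_def)
  have "\<exists>!u. u \<in> V i \<and> bproj blk i (B i *v u) = bproj blk i s"
  proof (rule ex1I[of _ u])
    show "u \<in> V i \<and> bproj blk i (B i *v u) = bproj blk i s" using u by (simp add: Mop_def)
    fix w assume "w \<in> V i \<and> bproj blk i (B i *v w) = bproj blk i s"
    then have "w \<in> V i" "Mop i w = Mop i u" using u by (auto simp: Mop_def)
    then show "w = u" using inj u(1) by (auto dest: inj_onD)
  qed
  then show ?thesis unfolding binv_def by (rule theI')
qed

lemma dual_ineq: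
  assumes i: "i < n" and t: "t \<in> V i"
  shows "s \<bullet> t \<le> bdual blk B i s * bnorm blk B i t"
proof -
  define u where "u = binv blk B i s"
  have u: "u \<in> V i" "bproj blk i (B i *v u) = bproj blk i s" using binv_ex[OF i] by (auto simp: u_def)
  have st: "s \<bullet> t = t \<bullet> (B i *v u)"
  proof -
    have "s \<bullet> t = bproj blk i s \<bullet> t" by (rule inner_bproj[OF t])
    also have "\<dots> = bproj blk i (B i *v u) \<bullet> t" using u by simp
    also have "\<dots> = (B i *v u) \<bullet> t" using inner_bproj[OF t] by simp
    finally show ?thesis by (simp add: inner_commute)
  qed
  have uu: "u \<bullet> (B i *v u) = bproj blk i s \<bullet> u"
  proof -
    have "u \<bullet> (B i *v u) = bproj blk i (B i *v u) \<bullet> u"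
      using inner_bproj[OF u(1), of "B i *v u"] by (simp add: inner_commute)
    then show ?thesis using u by simp
  qed
  have "bdual blk B i s = sqrt (bproj blk i s \<bullet> u)" by (simp add: bdual_def u_def)
  then have bd: "bdual blk B i s = sqrt (u \<bullet> (B i *v u))" by (simp add: uu)
  have bn: "bnorm blk B i t = sqrt (t \<bullet> (B i *v t))" by (simp add: bnorm_qf qf_V[OF t])
  have "s \<bullet> t \<le> sqrt ((s \<bullet> t)^2)" by simp
  also have "(s \<bullet> t)^2 \<le> (t \<bullet> (B i *v t)) * (u \<bullet> (B i *v u))" unfolding st by (rule bil_CS[OF i t u(1)])
  then have "sqrt ((s \<bullet> t)^2) \<le> sqrt (t \<bullet> (B i *v t)) * sqrt (u \<bullet> (B i *v u))"
    by (metis real_sqrt_le_mono real_sqrt_mult)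
  finally show ?thesis by (simp add: bd bn mult.commute)
qed

end


locale f_setup = blk_setup blk n B
  for blk :: "'N::finite \<Rightarrow> nat" and n B +
  fixes f :: "real^'N \<Rightarrow> real" and g :: "real^'N \<Rightarrow> real^'N" and L :: "nat \<Rightarrow> real"
  assumes L_pos: "\<forall>i<n. L i > 0"
    and f_convex: "convex_on UNIV f"
    and f_grad: "\<forall>x. (f has_derivative (\<lambda>h. g x \<bullet> h)) (at x)"
    and f_lip: "\<forall>i<n. \<forall>x. \<forall>t \<in> blockspace blk i.
                  bdual blk B i (bproj blk i (g (x + t)) - bproj blk i (g x)) \<le> L i * bnorm blk B i t"
begin

lemma line_deriv:
  "((\<lambda>r. f (x + r *\<^sub>R d)) has_real_derivative (g (x + r *\<^sub>R d) \<bullet> d)) (at r within S)"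
proof -
  have l: "((\<lambda>r. x + r *\<^sub>R d) has_derivative (\<lambda>h. h *\<^sub>R d)) (at r within S)"
    by (auto intro!: derivative_eq_intros)
  have "((\<lambda>r. f (x + r *\<^sub>R d)) has_derivative (\<lambda>h. g (x + r *\<^sub>R d) \<bullet> (h *\<^sub>R d))) (at r within S)"
    using has_derivative_compose[OF l f_grad[rule_format]] by simp
  moreover have "(\<lambda>h. g (x + r *\<^sub>R d) \<bullet> (h *\<^sub>R d)) = (*) (g (x + r *\<^sub>R d) \<bullet> d)"
    by (auto simp: mult.commute)
  ultimately show ?thesis by (simp add: has_field_derivative_def)
qed

lemma descent:
  assumes i: "i < n" and t: "t \<in> V i"
  shows "f (x + t) \<le> f x + g x \<bullet> t + L i / 2 * qf blk B i t"
proof -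
  define Q where "Q = qf blk B i t"
  have Q: "0 \<le> Q" using qf_nonneg[OF i] by (simp add: Q_def)
  define \<phi> where "\<phi> r = f (x + r *\<^sub>R t) - r * (g x \<bullet> t) - L i / 2 * r^2 * Q" for r
  define \<phi>' where "\<phi>' r = g (x + r *\<^sub>R t) \<bullet> t - g x \<bullet> t - L i * r * Q" for r
  have d: "(\<phi> has_real_derivative \<phi>' r) (at r)" for r
  proof -
    have D2: "((\<lambda>r. r * (g x \<bullet> t) + L i / 2 * r^2 * Q) has_real_derivative (g x \<bullet> t + L i * r * Q)) (at r)"
      by (auto intro!: derivative_eq_intros simp: field_simps)
    have "((\<lambda>r. f (x + r *\<^sub>R t) - (r * (g x \<bullet> t) + L i / 2 * r^2 * Q)) has_real_derivative
           (g (x + r *\<^sub>R t) \<bullet> t - g x \<bullet> t - L i * r * Q)) (at r)"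
      using DERIV_diff[OF line_deriv D2] by (simp add: algebra_simps)
    moreover have "\<phi> = (\<lambda>r. f (x + r *\<^sub>R t) - (r * (g x \<bullet> t) + L i / 2 * r^2 * Q))"
      by (simp add: fun_eq_iff \<phi>_def)
    ultimately show ?thesis by (simp add: \<phi>'_def)
  qed
  obtain z where z: "0 < z" "z < 1" "\<phi> 1 - \<phi> 0 = (1 - 0) * \<phi>' z"
    using MVT2[of 0 1 \<phi> \<phi>'] d by auto
  have "\<phi>' z \<le> 0"
  proof -
    have zt: "z *\<^sub>R t \<in> V i" using t by (rule blockspace_scaleR)
    have "g (x + z *\<^sub>R t) \<bullet> t - g x \<bullet> t = (bproj blk i (g (x + z *\<^sub>R t)) - bproj blk i (g x)) \<bullet> t"
      using inner_bproj[OF t] by (simp add: inner_diff_left)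
    also have "\<dots> \<le> bdual blk B i (bproj blk i (g (x + z *\<^sub>R t)) - bproj blk i (g x)) * bnorm blk B i t"
      by (rule dual_ineq[OF i t])
    also have "\<dots> \<le> L i * bnorm blk B i (z *\<^sub>R t) * bnorm blk B i t"
      using f_lip i zt qf_nonneg[OF i, of t] by (intro mult_right_mono) (auto simp: bnorm_def qf_def)
    also have "bnorm blk B i (z *\<^sub>R t) = z * bnorm blk B i t"
      using z by (simp add: bnorm_qf qf_scaleR real_sqrt_mult)
    also have "L i * (z * bnorm blk B i t) * bnorm blk B i t = L i * z * Q"
      using bnorm_sq[OF i, of t] by (simp add: Q_def power2_eq_square)
    finally show ?thesis by (simp add: \<phi>'_def)
  qed
  then have "\<phi> 1 \<le> \<phi> 0" using z by simp
  then show ?thesis by (simp add: \<phi>_def Q_def)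
qed

lemma grad_ineq: "f x + g x \<bullet> (y - x) \<le> f y"
proof -
  define d where "d = y - x"
  define \<phi> where "\<phi> r = f (x + r *\<^sub>R d)" for r
  have cv: "convex_on UNIV \<phi>"
  proof (rule convex_onI)
    fix \<tau> a b :: real assume "0 < \<tau>" "\<tau> < 1"
    have "x + ((1 - \<tau>) *\<^sub>R a + \<tau> *\<^sub>R b) *\<^sub>R d = (1 - \<tau>) *\<^sub>R (x + a *\<^sub>R d) + \<tau> *\<^sub>R (x + b *\<^sub>R d)"
      by (simp add: algebra_simps)
    then show "\<phi> ((1 - \<tau>) *\<^sub>R a + \<tau> *\<^sub>R b) \<le> (1 - \<tau>) * \<phi> a + \<tau> * \<phi> b"
      using convex_onD[OF f_convex, of \<tau> "x + a *\<^sub>R d" "x + b *\<^sub>R d"] \<open>0 < \<tau>\<close> \<open>\<tau> < 1\<close>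
      by (simp add: \<phi>_def)
  qed simp
  have "\<phi> = (\<lambda>r. f (x + r *\<^sub>R d))" by (simp add: fun_eq_iff \<phi>_def)
  then have "(\<phi> has_field_derivative (g x \<bullet> d)) (at 0 within UNIV)"
    using line_deriv[of x d 0 UNIV] by simp
  then have "\<phi> 1 - \<phi> 0 \<ge> (g x \<bullet> d) * (1 - 0)"
    by (intro convex_on_imp_above_tangent[OF cv]) auto
  then show ?thesis by (simp add: \<phi>_def d_def)
qed

end


lemma lsc_min:
  fixes h :: "'a::topological_space \<Rightarrow> ereal"
  assumes cl: "\<And>y. closed {t. t \<in> S \<and> h t \<le> ereal y}"
    and K: "compact K" "K \<subseteq> S" "K \<noteq> {}"
  shows "\<exists>t\<in>K. \<forall>s\<in>K. h t \<le> h s"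
proof -
  define v where "v = (INF s\<in>K. h s)"
  define C where "C y = {t. t \<in> S \<and> h t \<le> ereal y}" for y
  define F where "F = C ` {y. v < ereal y}"
  have "K \<inter> \<Inter>F \<noteq> {}"
  proof (rule compact_imp_fip[OF K(1)])
    show "closed T" if "T \<in> F" for T using that cl by (auto simp: F_def C_def)
  next
    fix F' assume F': "finite F'" "F' \<subseteq> F"
    then obtain Y where Y: "Y \<subseteq> {y. v < ereal y}" "finite Y" "F' = C ` Y"
      unfolding F_def by (meson finite_subset_image)
    show "K \<inter> \<Inter>F' \<noteq> {}"
    proof (cases "Y = {}")
      case True then show ?thesis using Y K by auto
    next
      case False
      define m where "m = Min Y"
      have m: "m \<in> Y" "\<And>y. y \<in> Y \<Longrightarrow> m \<le> y" using False Y by (auto simp: m_def)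
      then have "v < ereal m" using Y by auto
      then obtain t where t: "t \<in> K" "h t < ereal m" unfolding v_def by (auto simp: INF_less_iff)
      have "t \<in> C y" if "y \<in> Y" for y
        using t K m(2)[OF that] by (auto simp: C_def intro: order.trans[OF less_imp_le])
      then have "t \<in> K \<inter> \<Inter>F'" using t Y by auto
      then show ?thesis by blast
    qed
  qed
  then obtain t where t: "t \<in> K" "\<And>y. v < ereal y \<Longrightarrow> h t \<le> ereal y"
    by (auto simp: F_def C_def)
  have "h t \<le> v"
  proof (rule dense_ge)
    fix w assume w: "v < w"
    show "h t \<le> w"
    proof (cases w)
      case (real y) then show ?thesis using t w by auto
    next
      case PInf then show ?thesis by simp
    next
      case MInf then show ?thesis using w by simp
    qed
  qed
  then have "\<forall>s\<in>K. h t \<le> h s" unfolding v_def by (meson INF_lower order.trans)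
  then show ?thesis using t by blast
qed

lemma ereal_add_le_iff: "ereal a + (P::ereal) \<le> ereal y \<longleftrightarrow> P \<le> ereal (y - a)"
  by (cases P) auto


locale psi_setup = f_setup blk n B f g L
  for blk :: "'N::finite \<Rightarrow> nat" and n B f g L +
  fixes Psi :: "nat \<Rightarrow> real^'N \<Rightarrow> ereal"
  assumes blocks: "\<forall>j. blk j < n"
    and Psi_proper: "\<forall>i<n. (\<forall>t \<in> blockspace blk i. Psi i t \<noteq> -\<infinity>)
                          \<and> (\<exists>t \<in> blockspace blk i. Psi i t < \<infinity>)"
    and Psi_convex: "\<forall>i<n. convex {(t, y::real). t \<in> blockspace blk i \<and> Psi i t \<le> ereal y}"
    and Psi_closed: "\<forall>i<n. closed {(t, y::real). t \<in> blockspace blk i \<and> Psi i t \<le> ereal y}"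
begin

lemma Psi_nm: "i < n \<Longrightarrow> t \<in> V i \<Longrightarrow> Psi i t \<noteq> -\<infinity>"
  using Psi_proper by auto

lemma Psi_fin: "i < n \<Longrightarrow> t \<in> V i \<Longrightarrow> Psi i t < \<infinity> \<Longrightarrow> Psi i t = ereal (real_of_ereal (Psi i t))"
  using Psi_nm by (cases "Psi i t") auto

lemma psi_cvx:
  assumes i: "i < n" and a: "a \<in> V i" and b: "b \<in> V i" and fa: "Psi i a < \<infinity>" and fb: "Psi i b < \<infinity>"
    and l: "0 \<le> l" "l \<le> 1"
  shows "Psi i ((1 - l) *\<^sub>R a + l *\<^sub>R b)
           \<le> ereal ((1 - l) * real_of_ereal (Psi i a) + l * real_of_ereal (Psi i b))"
proof -
  let ?E = "{(t, y::real). t \<in> blockspace blk i \<and> Psi i t \<le> ereal y}"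
  have "(a, real_of_ereal (Psi i a)) \<in> ?E" using a Psi_fin[OF i a fa] by simp
  moreover have "(b, real_of_ereal (Psi i b)) \<in> ?E" using b Psi_fin[OF i b fb] by simp
  ultimately have "(1 - l) *\<^sub>R (a, real_of_ereal (Psi i a)) + l *\<^sub>R (b, real_of_ereal (Psi i b)) \<in> ?E"
    using Psi_convex i l unfolding convex_def by (meson diff_ge_0_iff_ge diff_add_cancel add.commute)
  then show ?thesis by simp
qed

lemma qf_lower: "i < n \<Longrightarrow> \<exists>\<beta>>0. \<forall>t\<in>V i. \<beta> * (norm t)^2 \<le> qf blk B i t"
proof -
  assume i: "i < n"
  show ?thesis
  proof (cases "\<exists>u\<in>V i. u \<noteq> 0")
    case False
    then show ?thesis by (intro exI[of _ 1]) (auto simp: qf_def)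
  next
    case True
    then obtain u where u: "u \<in> V i" "u \<noteq> 0" by blast
    define S where "S = sphere 0 1 \<inter> V i"
    have cS: "compact S" unfolding S_def by (intro compact_Int_closed compact_sphere closed_blockspace)
    have "(1 / norm u) *\<^sub>R u \<in> S" using u by (auto simp: S_def blockspace_scaleR)
    then have nS: "S \<noteq> {}" by auto
    obtain t0 where t0: "t0 \<in> S" "\<And>s. s \<in> S \<Longrightarrow> qf blk B i t0 \<le> qf blk B i s"
      using continuous_attains_inf[OF cS nS continuous_on_subset[OF continuous_qf]] by blast
    have t0V: "t0 \<in> V i" "t0 \<noteq> 0" using t0(1) by (auto simp: S_def)
    have b0: "0 < qf blk B i t0"
      using t0V B_pd i by (simp add: qf_V)
    show ?thesis
    proof (intro exI[of _ "qf blk B i t0"] conjI ballI b0)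
      fix t assume t: "t \<in> V i"
      show "qf blk B i t0 * (norm t)^2 \<le> qf blk B i t"
      proof (cases "t = 0")
        case True then show ?thesis by (simp add: qf_def)
      next
        case False
        have "(1 / norm t) *\<^sub>R t \<in> S" using t False by (auto simp: S_def blockspace_scaleR)
        then have "qf blk B i t0 \<le> qf blk B i ((1 / norm t) *\<^sub>R t)" by (rule t0(2))
        also have "\<dots> = qf blk B i t / (norm t)^2" by (simp add: qf_scaleR power_divide)
        finally show ?thesis using False by (simp add: field_simps)
      qed
    qed
  qed
qed

definition hobj where
  "hobj i c p t = ereal (c \<bullet> t + L i / 2 * qf blk B i t) + Psi i (p + t)"

lemma hobj_closed:
  assumes i: "i < n" and p: "p \<in> V i"
  shows "closed {t. t \<in> V i \<and> hobj i c p t \<le> ereal y}"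
proof -
  let ?E = "{(t, y::real). t \<in> blockspace blk i \<and> Psi i t \<le> ereal y}"
  let ?m = "\<lambda>t. (p + t, y - (c \<bullet> t + L i / 2 * qf blk B i t))"
  have eq: "{t. t \<in> V i \<and> hobj i c p t \<le> ereal y} = ?m -` ?E"
  proof (rule set_eqI)
    fix t
    have "t \<in> V i \<longleftrightarrow> p + t \<in> V i"
      using p blockspace_add[OF p, of t] blockspace_diff[of "p + t" blk i p] by auto
    then show "t \<in> {t. t \<in> V i \<and> hobj i c p t \<le> ereal y} \<longleftrightarrow> t \<in> ?m -` ?E"
      by (simp add: hobj_def ereal_add_le_iff)
  qed
  have "continuous_on UNIV ?m"
    by (intro continuous_intros continuous_on_compose2[OF continuous_qf]) auto
  then show ?thesis unfolding eq using Psi_closed i by (intro closed_vimage) auto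
qed

end


lemma aux_lin: "(a::real) \<le> b - x / 2 \<Longrightarrow> x \<le> 2 * (b - a)" by (simp add: field_simps)

context psi_setup begin

lemma hobj_nm: "i < n \<Longrightarrow> p \<in> V i \<Longrightarrow> t \<in> V i \<Longrightarrow> hobj i c p t \<noteq> -\<infinity>"
  using Psi_nm[of i "p + t"] blockspace_add[of p blk i t] by (simp add: hobj_def)

lemma hobj_real:
  assumes i: "i < n" and p: "p \<in> V i" and t: "t \<in> V i" and fin: "hobj i c p t < \<infinity>"
  shows "Psi i (p + t) < \<infinity>"
    "hobj i c p t = ereal (c \<bullet> t + L i / 2 * qf blk B i t + real_of_ereal (Psi i (p + t)))"
proof -
  show f: "Psi i (p + t) < \<infinity>" using fin by (cases "Psi i (p + t)") (auto simp: hobj_def)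
  have "p + t \<in> V i" using p t by (rule blockspace_add)
  then obtain v where v: "Psi i (p + t) = ereal v" using Psi_fin[OF i _ f] by blast
  then show "hobj i c p t = ereal (c \<bullet> t + L i / 2 * qf blk B i t + real_of_ereal (Psi i (p + t)))"
    by (simp add: hobj_def)
qed

lemma min_exists:
  assumes i: "i < n" and p: "p \<in> V i" and fp: "Psi i p < \<infinity>"
  shows "\<exists>t\<in>V i. \<forall>s\<in>V i. hobj i c p t \<le> hobj i c p s"
proof -
  let ?h = "hobj i c p"
  define m0 where "m0 = real_of_ereal (Psi i p)"
  have h0: "?h 0 = ereal m0" using Psi_fin[OF i p fp] by (simp add: hobj_def qf_def m0_def)
  have cl: "\<And>y. closed {t. t \<in> V i \<and> ?h t \<le> ereal y}" using hobj_closed[OF i p] by blast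
  define K1 where "K1 = cball 0 1 \<inter> V i"
  have K1: "compact K1" "K1 \<subseteq> V i" "0 \<in> K1"
    unfolding K1_def by (auto intro: compact_Int_closed closed_blockspace)
  obtain t1 where t1: "t1 \<in> K1" "\<And>s. s \<in> K1 \<Longrightarrow> ?h t1 \<le> ?h s"
    using lsc_min[OF cl K1(1,2)] K1(3) by blast
  have "?h t1 \<le> ereal m0" using t1(2)[OF K1(3)] h0 by simp
  moreover have "?h t1 \<noteq> -\<infinity>" using hobj_nm[OF i p] t1(1) K1(2) by auto
  ultimately obtain mu where mu: "?h t1 = ereal mu" by (cases "?h t1") auto
  have mum: "mu \<le> m0" using t1(2)[OF K1(3)] h0 mu by simp
  obtain \<beta> where \<beta>: "\<beta> > 0" "\<And>t. t \<in> V i \<Longrightarrow> \<beta> * (norm t)^2 \<le> qf blk B i t"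
    using qf_lower[OF i] by blast
  have Li: "0 < L i" using L_pos i by simp
  define R where "R = 1 + 2 * (m0 - mu) / (L i * \<beta>)"
  have R1: "1 \<le> R" using mum Li \<beta> by (simp add: R_def)
  have bound: "norm t \<le> R" if t: "t \<in> V i" and ht: "?h t \<le> ?h 0" for t
  proof (rule ccontr)
    assume "\<not> norm t \<le> R"
    then have rR: "R < norm t" by simp
    define r where "r = norm t"
    have r1: "1 < r" using rR R1 by (simp add: r_def)
    define l where "l = 1 / r"
    have l: "0 \<le> l" "l \<le> 1" "l * r = 1" using r1 by (auto simp: l_def)
    define q where "q = qf blk B i t"
    have q: "\<beta> * r^2 \<le> q" using \<beta>(2)[OF t] by (simp add: q_def r_def)
    have fin: "?h t < \<infinity>" using ht h0 by auto
    define a where "a = real_of_ereal (Psi i (p + t))"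
    have fpt: "Psi i (p + t) < \<infinity>" by (rule hobj_real(1)[OF i p t fin])
    have ht_eq: "?h t = ereal (c \<bullet> t + L i / 2 * q + a)"
      using hobj_real(2)[OF i p t fin] by (simp add: q_def a_def)
    have htm: "c \<bullet> t + L i / 2 * q + a \<le> m0" using ht ht_eq h0 by simp
    have ltK: "l *\<^sub>R t \<in> K1" using t l r1 by (auto simp: K1_def blockspace_scaleR l_def r_def)
    have "ereal mu \<le> ?h (l *\<^sub>R t)" using t1(2)[OF ltK] mu by simp
    also have "?h (l *\<^sub>R t) = ereal (l * (c \<bullet> t) + L i / 2 * (l^2 * q)) + Psi i ((1 - l) *\<^sub>R p + l *\<^sub>R (p + t))"
      by (simp add: hobj_def qf_scaleR q_def algebra_simps)
    also have "\<dots> \<le> ereal (l * (c \<bullet> t) + L i / 2 * (l^2 * q)) + ereal ((1 - l) * m0 + l * a)"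
      using psi_cvx[OF i p blockspace_add[OF p t] fp fpt l(1,2)]
      by (intro add_left_mono) (simp add: m0_def a_def)
    finally have ineq: "mu \<le> l * (c \<bullet> t) + L i / 2 * (l^2 * q) + ((1 - l) * m0 + l * a)" by simp
    have "l * (c \<bullet> t) + L i / 2 * (l^2 * q) + ((1 - l) * m0 + l * a)
          = (1 - l) * m0 + l * (c \<bullet> t + L i / 2 * q + a) - L i / 2 * (l * (1 - l) * q)"
      by (simp add: algebra_simps power2_eq_square)
    also have "\<dots> \<le> (1 - l) * m0 + l * m0 - L i / 2 * (l * (1 - l) * (\<beta> * r^2))"
    proof -
      have "l * (c \<bullet> t + L i / 2 * q + a) \<le> l * m0" using htm l by (intro mult_left_mono) auto
      moreover have "L i / 2 * (l * (1 - l) * (\<beta> * r^2)) \<le> L i / 2 * (l * (1 - l) * q)"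
        using q l Li by (intro mult_left_mono) auto
      ultimately show ?thesis by linarith
    qed
    also have "l * (1 - l) * (\<beta> * r^2) = \<beta> * (r - 1)"
      using r1 by (simp add: l_def power2_eq_square field_simps)
    finally have "mu \<le> m0 - L i / 2 * (\<beta> * (r - 1))" using ineq by (simp add: algebra_simps)
    moreover have "L i / 2 * (\<beta> * (r - 1)) = (L i * \<beta> * (r - 1)) / 2" by simp
    ultimately have "mu \<le> m0 - (L i * \<beta> * (r - 1)) / 2" by simp
    then have "L i * \<beta> * (r - 1) \<le> 2 * (m0 - mu)" by (rule aux_lin)
    then have "r - 1 \<le> 2 * (m0 - mu) / (L i * \<beta>)" using Li \<beta> by (simp add: field_simps)
    then show False using rR by (simp add: R_def r_def)
  qed
  define K2 where "K2 = cball 0 R \<inter> V i"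
  have K2: "compact K2" "K2 \<subseteq> V i" "0 \<in> K2"
    unfolding K2_def using R1 by (auto intro: compact_Int_closed closed_blockspace)
  obtain t2 where t2: "t2 \<in> K2" "\<And>s. s \<in> K2 \<Longrightarrow> ?h t2 \<le> ?h s"
    using lsc_min[OF cl K2(1,2)] K2(3) by blast
  have "\<forall>s\<in>V i. ?h t2 \<le> ?h s"
  proof
    fix s assume s: "s \<in> V i"
    show "?h t2 \<le> ?h s"
    proof (cases "norm s \<le> R")
      case True then show ?thesis using t2 s by (auto simp: K2_def)
    next
      case False
      then have "\<not> ?h s \<le> ?h 0" using bound s by blast
      then show ?thesis using t2(2)[OF K2(3)] by auto
    qed
  qed
  then show ?thesis using t2(1) K2(2) by blast
qed

end


context psi_setup begin

definition Pj where "Pj x j = real_of_ereal (Psi j (bproj blk j x))"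
definition Fr where "Fr x = f x + (\<Sum>j<n. Pj x j)"
definition Fin where "Fin x \<longleftrightarrow> (\<forall>j<n. Psi j (bproj blk j x) < \<infinity>)"
abbreviation Fx where "Fx \<equiv> Fobj f blk Psi n"
abbreviation Tt where "Tt i x \<equiv> Tstep blk B L g Psi i x"
definition ob where "ob i x = real_of_ereal (hobj i (bproj blk i (g x)) (bproj blk i x) (Tt i x))"

lemma Psi_tot_fin: "Fin x \<Longrightarrow> Psi_tot blk Psi n x = ereal (\<Sum>j<n. Pj x j)"
proof -
  assume F: "Fin x"
  have "Psi_tot blk Psi n x = (\<Sum>j<n. ereal (Pj x j))"
    unfolding Psi_tot_def Pj_def by (intro sum.cong refl Psi_fin bproj_in) (use F in \<open>auto simp: Fin_def\<close>)
  then show ?thesis by simp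
qed

lemma F_fin: "Fin x \<Longrightarrow> Fx x = ereal (Fr x)"
  by (simp add: Fobj_def Psi_tot_fin Fr_def)

lemma Fin_of: "Fx x < \<infinity> \<Longrightarrow> Fin x"
proof (rule ccontr)
  assume a: "Fx x < \<infinity>" "\<not> Fin x"
  then obtain j where j: "j < n" "\<not> Psi j (bproj blk j x) < \<infinity>" by (auto simp: Fin_def)
  then have "Psi_tot blk Psi n x = \<infinity>" unfolding Psi_tot_def by (subst sum_Pinfty) auto
  then show False using a by (simp add: Fobj_def)
qed

lemma hobj_eq_obj:
  assumes i: "i < n"
  shows "(\<lambda>t. ereal (bproj blk i (g x) \<bullet> t + L i / 2 * (bnorm blk B i t)\<^sup>2) + Psi i (bproj blk i x + t))
       = hobj i (bproj blk i (g x)) (bproj blk i x)"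
  using bnorm_sq[OF i] by (simp add: hobj_def fun_eq_iff)

lemma Tt_min:
  assumes F: "Fin x" and i: "i < n"
  shows "Tt i x \<in> V i" "\<And>s. s \<in> V i \<Longrightarrow> hobj i (bproj blk i (g x)) (bproj blk i x) (Tt i x)
                                         \<le> hobj i (bproj blk i (g x)) (bproj blk i x) s"
proof -
  let ?h = "hobj i (bproj blk i (g x)) (bproj blk i x)"
  have ex: "\<exists>t. t \<in> V i \<and> (\<forall>s\<in>V i. ?h t \<le> ?h s)"
    using min_exists[OF i bproj_in, of x "bproj blk i (g x)"] F i by (auto simp: Fin_def)
  have "Tt i x = (SOME t. t \<in> V i \<and> (\<forall>s\<in>V i. ?h t \<le> ?h s))"
    unfolding Tstep_def Let_def hobj_eq_obj[OF i] ..
  then have "Tt i x \<in> V i \<and> (\<forall>s\<in>V i. ?h (Tt i x) \<le> ?h s)"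
    using someI_ex[OF ex] by simp
  then show "Tt i x \<in> V i" "\<And>s. s \<in> V i \<Longrightarrow> ?h (Tt i x) \<le> ?h s" by auto
qed

lemma hobj_at0: "Fin x \<Longrightarrow> i < n \<Longrightarrow> hobj i (bproj blk i (g x)) (bproj blk i x) 0 = ereal (Pj x i)"
  using Psi_fin[OF _ bproj_in] by (simp add: hobj_def qf_def Fin_def Pj_def)

lemma ob_props:
  assumes F: "Fin x" and i: "i < n"
  shows "hobj i (bproj blk i (g x)) (bproj blk i x) (Tt i x) = ereal (ob i x)" "ob i x \<le> Pj x i"
    "Psi i (bproj blk i x + Tt i x) < \<infinity>"
    "ob i x = bproj blk i (g x) \<bullet> Tt i x + L i / 2 * qf blk B i (Tt i x)
              + real_of_ereal (Psi i (bproj blk i x + Tt i x))"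
proof -
  let ?h = "hobj i (bproj blk i (g x)) (bproj blk i x)"
  have le: "?h (Tt i x) \<le> ereal (Pj x i)" using Tt_min(2)[OF F i, of 0] hobj_at0[OF F i] by simp
  then have fin: "?h (Tt i x) < \<infinity>" by auto
  note hr = hobj_real[OF i bproj_in Tt_min(1)[OF F i] fin]
  show "?h (Tt i x) = ereal (ob i x)" using hr(2) by (simp add: ob_def)
  then show "ob i x \<le> Pj x i" using le by simp
  show "Psi i (bproj blk i x + Tt i x) < \<infinity>" by (rule hr(1))
  show "ob i x = bproj blk i (g x) \<bullet> Tt i x + L i / 2 * qf blk B i (Tt i x)
              + real_of_ereal (Psi i (bproj blk i x + Tt i x))" using hr(2) by (simp add: ob_def)
qed

lemma bproj_step:
  assumes t: "t \<in> V i"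
  shows "bproj blk j (x + t) = (if j = i then bproj blk i x + t else bproj blk j x)"
  using t by (auto simp: bproj_add bproj_id bproj_other)

lemma step_props:
  assumes F: "Fin x" and i: "i < n"
  shows "Fin (x + Tt i x)" "Fr (x + Tt i x) \<le> Fr x - Pj x i + ob i x"
proof -
  define T where "T = Tt i x"
  have T: "T \<in> V i" using Tt_min(1)[OF F i] by (simp add: T_def)
  have bp: "bproj blk j (x + T) = (if j = i then bproj blk i x + T else bproj blk j x)" for j
    by (rule bproj_step[OF T])
  have fi: "Psi i (bproj blk i x + T) < \<infinity>" using ob_props(3)[OF F i] by (simp add: T_def)
  show F2: "Fin (x + Tt i x)" using F fi bp unfolding Fin_def T_def by auto
  have Pj2: "Pj (x + T) j = (if j = i then real_of_ereal (Psi i (bproj blk i x + T)) else Pj x j)" for j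
    using bp by (simp add: Pj_def)
  have sumP: "(\<Sum>j<n. Pj (x + T) j) = (\<Sum>j<n. Pj x j) - Pj x i + real_of_ereal (Psi i (bproj blk i x + T))"
  proof -
    have "(\<Sum>j<n. Pj (x + T) j) = (\<Sum>j<n. Pj x j + (if j = i then real_of_ereal (Psi i (bproj blk i x + T)) - Pj x i else 0))"
      by (intro sum.cong) (auto simp: Pj2)
    also have "\<dots> = (\<Sum>j<n. Pj x j) + (real_of_ereal (Psi i (bproj blk i x + T)) - Pj x i)"
      using i by (simp add: sum.distrib)
    finally show ?thesis by simp
  qed
  have desc: "f (x + T) \<le> f x + bproj blk i (g x) \<bullet> T + L i / 2 * qf blk B i T"
    using descent[OF i T, of x] inner_bproj[OF T, of "g x"] by simp
  show "Fr (x + Tt i x) \<le> Fr x - Pj x i + ob i x"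
    using desc sumP ob_props(4)[OF F i] by (simp add: Fr_def T_def)
qed

end


context psi_setup begin

lemma normL_sq: "(\<forall>i<n. 0 < L i) \<Longrightarrow> (normL blk B L n d)^2 = (\<Sum>i<n. L i * qf blk B i d)"
proof -
  assume Lp: "\<forall>i<n. 0 < L i"
  have nn: "0 \<le> (\<Sum>i<n. L i * (bnorm blk B i d)\<^sup>2)" using Lp by (intro sum_nonneg) (auto intro: less_imp_le)
  have "(normL blk B L n d)^2 = (\<Sum>i<n. L i * (bnorm blk B i d)\<^sup>2)" using nn by (simp add: normL_def)
  also have "\<dots> = (\<Sum>i<n. L i * qf blk B i d)" by (intro sum.cong) (auto simp: bnorm_sq)
  finally show ?thesis .
qed

lemma ob_bound:
  assumes F: "Fin x" and Fs: "Fin xs" and a: "0 \<le> a" "a \<le> 1" and i: "i < n"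
  shows "ob i x \<le> a * (g x \<bullet> bproj blk i (xs - x)) + L i / 2 * (a^2 * qf blk B i (xs - x))
                  + ((1 - a) * Pj x i + a * Pj xs i)"
proof -
  define d where "d = xs - x"
  define hi where "hi = a *\<^sub>R bproj blk i d"
  have hi: "hi \<in> V i" by (simp add: hi_def blockspace_scaleR bproj_in)
  let ?h = "hobj i (bproj blk i (g x)) (bproj blk i x)"
  have "ereal (ob i x) \<le> ?h hi" using Tt_min(2)[OF F i hi] ob_props(1)[OF F i] by simp
  also have "?h hi = ereal (a * (g x \<bullet> bproj blk i d) + L i / 2 * (a^2 * qf blk B i d))
                     + Psi i ((1 - a) *\<^sub>R bproj blk i x + a *\<^sub>R bproj blk i xs)"
  proof -
    have "bproj blk i (g x) \<bullet> hi = a * (g x \<bullet> bproj blk i d)"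
      using inner_bproj[OF bproj_in, of "g x" blk i d] by (simp add: hi_def)
    moreover have "qf blk B i hi = a^2 * qf blk B i d"
    proof -
      have "qf blk B i hi = a^2 * qf blk B i (bproj blk i d)" by (simp add: hi_def qf_scaleR)
      also have "qf blk B i (bproj blk i d) = qf blk B i d" by (simp add: qf_def)
      finally show ?thesis .
    qed
    moreover have "bproj blk i x + hi = (1 - a) *\<^sub>R bproj blk i x + a *\<^sub>R bproj blk i xs"
      by (simp add: hi_def d_def bproj_diff algebra_simps)
    ultimately show ?thesis by (simp add: hobj_def)
  qed
  also have "\<dots> \<le> ereal (a * (g x \<bullet> bproj blk i d) + L i / 2 * (a^2 * qf blk B i d))
                   + ereal ((1 - a) * Pj x i + a * Pj xs i)"
    using psi_cvx[OF i bproj_in bproj_in, of x xs a] F Fs i a by (intro add_left_mono) (auto simp: Fin_def Pj_def)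
  finally show ?thesis by (simp add: d_def)
qed

lemma avg_bound:
  assumes F: "Fin x" and Fs: "Fin xs" and a: "0 \<le> a" "a \<le> 1"
  shows "(\<Sum>i<n. Fr (x + Tt i x)) \<le> real n * Fr x - a * (Fr x - Fr xs) + a^2 * (normL blk B L n (x - xs))^2 / 2"
proof -
  define d where "d = xs - x"
  define N2 where "N2 = (normL blk B L n (x - xs))^2"
  have N2: "N2 = (\<Sum>i<n. L i * qf blk B i d)"
  proof -
    have "N2 = (\<Sum>i<n. L i * qf blk B i (x - xs))" unfolding N2_def by (rule normL_sq[OF L_pos])
    also have "\<dots> = (\<Sum>i<n. L i * qf blk B i d)"
      using qf_minus[of blk B _ "x - xs"] by (simp add: d_def)
    finally show ?thesis .
  qed
  have gd: "(\<Sum>i<n. g x \<bullet> bproj blk i d) = g x \<bullet> d"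
    by (simp add: inner_sum_right[symmetric] sum_bproj[OF blocks])
  have "(\<Sum>i<n. Fr (x + Tt i x)) \<le> (\<Sum>i<n. Fr x - Pj x i + ob i x)"
    by (intro sum_mono step_props(2)[OF F]) auto
  also have "\<dots> \<le> (\<Sum>i<n. Fr x - Pj x i + (a * (g x \<bullet> bproj blk i d) + L i / 2 * (a^2 * qf blk B i d)
                  + ((1 - a) * Pj x i + a * Pj xs i)))"
    by (intro sum_mono add_left_mono ob_bound[OF F Fs a, unfolded d_def[symmetric]]) auto
  also have "\<dots> = real n * Fr x - a * ((\<Sum>i<n. Pj x i) - (\<Sum>i<n. Pj xs i)) + a * (\<Sum>i<n. g x \<bullet> bproj blk i d)
                  + a^2 / 2 * (\<Sum>i<n. L i * qf blk B i d)"
    by (simp add: sum.distrib sum_subtractf sum_distrib_left algebra_simps)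
  also have "\<dots> = real n * Fr x - a * ((\<Sum>i<n. Pj x i) - (\<Sum>i<n. Pj xs i)) + a * (g x \<bullet> d) + a^2 * N2 / 2"
    by (simp add: gd N2)
  also have "\<dots> \<le> real n * Fr x - a * ((\<Sum>i<n. Pj x i) - (\<Sum>i<n. Pj xs i)) + a * (f xs - f x) + a^2 * N2 / 2"
    using grad_ineq[of x xs] a by (simp add: d_def mult_left_mono)
  also have "\<dots> = real n * Fr x - a * (Fr x - Fr xs) + a^2 * N2 / 2"
    by (simp add: Fr_def algebra_simps)
  finally show ?thesis by (simp add: N2_def)
qed

end


lemma ucdc_Xs: "ucdc blk B L g Psi x0 om k = Xs (\<lambda>i x. x + Tstep blk B L g Psi i x) x0 om k"
  by (induction k) (simp_all add: Let_def)

theorem theorem4: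
  fixes f :: "real^'N::finite \<Rightarrow> real" and g :: "real^'N \<Rightarrow> real^'N"
    and blk :: "'N \<Rightarrow> nat" and n :: nat and B :: "nat \<Rightarrow> real^'N^'N"
    and L :: "nat \<Rightarrow> real" and Psi :: "nat \<Rightarrow> real^'N \<Rightarrow> ereal"
    and x0 :: "real^'N" and rho eps :: real and k :: nat
    and F :: "real^'N \<Rightarrow> ereal" and Fstar :: ereal and RL D :: real
  defines "F \<equiv> Fobj f blk Psi n"
  defines "Fstar \<equiv> Inf (range F)"
  defines "RL \<equiv> Sup {normL blk B L n (y - xs) | y xs. F y \<le> F x0 \<and> F xs = Fstar}"
  defines "D \<equiv> real_of_ereal (F x0 - Fstar)"
  assumes blocks: "\<forall>j. blk j < n"
    and B_sym: "\<forall>i<n. \<forall>j l. blk j = i \<and> blk l = i \<longrightarrow> B i $ j $ l = B i $ l $ j"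
    and B_pd: "\<forall>i<n. \<forall>t \<in> blockspace blk i. t \<noteq> 0 \<longrightarrow> t \<bullet> (B i *v t) > 0"
    and L_pos: "\<forall>i<n. L i > 0"
    and f_convex: "convex_on UNIV f"
    and f_grad: "\<forall>x. (f has_derivative (\<lambda>h. g x \<bullet> h)) (at x)"
    and f_lip: "\<forall>i<n. \<forall>x. \<forall>t \<in> blockspace blk i.
                  bdual blk B i (bproj blk i (g (x + t)) - bproj blk i (g x)) \<le> L i * bnorm blk B i t"
    and Psi_proper: "\<forall>i<n. (\<forall>t \<in> blockspace blk i. Psi i t \<noteq> -\<infinity>)
                          \<and> (\<exists>t \<in> blockspace blk i. Psi i t < \<infinity>)"
    and Psi_convex: "\<forall>i<n. convex {(t, y::real). t \<in> blockspace blk i \<and> Psi i t \<le> ereal y}"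
    and Psi_closed: "\<forall>i<n. closed {(t, y::real). t \<in> blockspace blk i \<and> Psi i t \<le> ereal y}"
    and has_min: "\<exists>xs. F xs = Fstar"
    and x0_dom: "F x0 < \<infinity>"
    and RL_bdd: "bdd_above {normL blk B L n (y - xs) | y xs. F y \<le> F x0 \<and> F xs = Fstar}"
    and rho: "0 < rho" "rho < 1"
    and eps: "0 < eps"
    and choice:
      "(eps < D \<and>
          real k \<ge> 2 * real n * max (RL\<^sup>2) D / eps * (1 + ln (1 / rho)) + 2
                    - 2 * real n * max (RL\<^sup>2) D / D)
     \<or> (eps < min (RL\<^sup>2) D \<and>
          real k \<ge> 2 * real n * RL\<^sup>2 / eps * ln (D / (eps * rho)))"
  shows "measure_pmf.prob (Pi_pmf {..<k} 0 (\<lambda>_. pmf_of_set {..<n}))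
           {om. F (ucdc blk B L g Psi x0 om k) \<le> Fstar + ereal eps} \<ge> 1 - rho"
proof -
  interpret P: psi_setup blk n B f g L Psi
    by unfold_locales (fact B_sym, fact B_pd, fact L_pos, fact f_convex, fact f_grad, fact f_lip,
        fact blocks, fact Psi_proper, fact Psi_convex, fact Psi_closed)
  have FF: "F = P.Fx" by (simp add: F_def)
  have n: "n > 0" using blocks by (metis gr_zeroI not_less0)
  obtain xs where xs: "F xs = Fstar" using has_min by blast
  have Fin0: "P.Fin x0" using x0_dom FF P.Fin_of by simp
  have Fx0: "F x0 = ereal (P.Fr x0)" using P.F_fin[OF Fin0] FF by simp
  have Flow: "Fstar \<le> F y" for y unfolding Fstar_def by (rule Inf_lower) simp
  have "F xs < \<infinity>" using xs Flow[of x0] x0_dom by (metis order.strict_trans1)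
  then have Fins: "P.Fin xs" using FF P.Fin_of by simp
  define Fs where "Fs = P.Fr xs"
  have Fstar_eq: "Fstar = ereal Fs" using xs P.F_fin[OF Fins] FF by (simp add: Fs_def)
  have Fge: "Fs \<le> P.Fr y" if "P.Fin y" for y
    using Flow[of y] P.F_fin[OF that] FF Fstar_eq by simp
  have Deq: "D = P.Fr x0 - Fs" by (simp add: D_def Fx0 Fstar_eq)
  define Q where "Q x = (P.Fin x \<and> P.Fr x \<le> P.Fr x0)" for x
  define st where "st i x = x + Tstep blk B L g Psi i x" for i x
  define xi where "xi x = P.Fr x - Fs" for x
  have Qst: "Q (st i x)" "xi (st i x) \<le> xi x" if "Q x" "i < n" for x i
  proof -
    have a: "P.Fin x" using that by (simp add: Q_def)
    have "P.Fr (st i x) \<le> P.Fr x"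
      using P.step_props(2)[OF a that(2)] P.ob_props(2)[OF a that(2)] by (simp add: st_def)
    then show "Q (st i x)" "xi (st i x) \<le> xi x"
      using P.step_props(1)[OF a that(2)] that by (auto simp: Q_def st_def xi_def)
  qed
  have RLup: "(normL blk B L n (x - xs))^2 \<le> RL^2" if "Q x" for x
  proof -
    have "F x \<le> F x0" using that P.F_fin[of x] FF Fx0 by (simp add: Q_def)
    then have "normL blk B L n (x - xs) \<in> {normL blk B L n (y - xs) | y xs. F y \<le> F x0 \<and> F xs = Fstar}"
      using xs by blast
    then have "normL blk B L n (x - xs) \<le> RL" unfolding RL_def by (rule cSup_upper[OF _ RL_bdd])
    moreover have "0 \<le> normL blk B L n (x - xs)"
      unfolding normL_def using L_pos by (intro real_sqrt_ge_zero sum_nonneg mult_nonneg_nonneg) auto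
    ultimately show ?thesis by (rule power_mono)
  qed
  have main: "real (card {om \<in> Om n k. xi (Xs st x0 om k) \<le> eps}) / real n ^ k \<ge> 1 - rho"
  proof (rule abstract_main[where P=Q and Rsq="RL^2" and D=D])
    show "0 < n" by (rule n)
    show "Q x0" using Fin0 by (simp add: Q_def)
    show "\<And>x i. Q x \<Longrightarrow> i < n \<Longrightarrow> Q (st i x)" using Qst(1) .
    show "\<And>x. Q x \<Longrightarrow> 0 \<le> xi x" using Fge by (simp add: Q_def xi_def)
    show "\<And>x i. Q x \<Longrightarrow> i < n \<Longrightarrow> xi (st i x) \<le> xi x" using Qst(2) .
    show "(\<Sum>i<n. xi (st i x)) \<le> real n * xi x - a * xi x + a^2 * RL^2 / 2"
      if x: "Q x" and a: "0 \<le> a" "a \<le> 1" for x a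
    proof -
      have Fx: "P.Fin x" using x by (simp add: Q_def)
      have "(\<Sum>i<n. xi (st i x)) = (\<Sum>i<n. P.Fr (x + Tstep blk B L g Psi i x)) - real n * Fs"
        by (simp add: xi_def st_def sum_subtractf)
      also have "\<dots> \<le> real n * P.Fr x - a * (P.Fr x - P.Fr xs) + a^2 * (normL blk B L n (x - xs))^2 / 2 - real n * Fs"
        using P.avg_bound[OF Fx Fins a] by simp
      also have "\<dots> \<le> real n * P.Fr x - a * (P.Fr x - P.Fr xs) + a^2 * RL^2 / 2 - real n * Fs"
        using RLup[OF x] by (simp add: divide_right_mono mult_left_mono)
      also have "\<dots> = real n * xi x - a * xi x + a^2 * RL^2 / 2"
        by (simp add: xi_def Fs_def algebra_simps)
      finally show ?thesis .
    qed
    show "0 \<le> RL^2" by simp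
    show "xi x0 = D" by (simp add: xi_def Deq)
  qed (use rho eps choice in auto)
  have QX: "Q (Xs st x0 om k)" if "om \<in> Om n k" for om
    by (rule Xs_inv[where P=Q and n=n]) (use Fin0 Qst(1) Om_lt[OF that] in \<open>auto simp: Q_def\<close>)
  have seteq: "{om \<in> Om n k. xi (Xs st x0 om k) \<le> eps}
             = {om. F (ucdc blk B L g Psi x0 om k) \<le> Fstar + ereal eps} \<inter> Om n k"
  proof (rule set_eqI)
    fix om
    show "om \<in> {om \<in> Om n k. xi (Xs st x0 om k) \<le> eps} \<longleftrightarrow>
          om \<in> {om. F (ucdc blk B L g Psi x0 om k) \<le> Fstar + ereal eps} \<inter> Om n k"
    proof (cases "om \<in> Om n k")
      case True
      have u: "ucdc blk B L g Psi x0 om k = Xs st x0 om k"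
        by (simp add: ucdc_Xs st_def[abs_def])
      have "F (Xs st x0 om k) = ereal (P.Fr (Xs st x0 om k))"
        using QX[OF True] P.F_fin FF by (simp add: Q_def)
      then show ?thesis using True by (simp add: u Fstar_eq xi_def algebra_simps)
    qed simp
  qed
  show ?thesis using main by (simp add: prob_Om[OF n] seteq)
qed

end
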